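(* For points $P=(x,y)$, $Q=(x',y')$ in $\mathbb{R}^2$ with $xx'+yy'\leq 1$ define $\delta(P,Q)=\sqrt{2-2xx'-2yy'}$. Let $A_1=(0,-1)$ and let $B_1=(x_1,y_1)$, $C_1=(x_2,y_2)$, $D_1=(x_3,y_3)\in[-1,1]\times[-1,1]$ satisfy: (i) $x_1^2+y_1^2=1$, $|x_1-1|\leq 1/25$, $|y_1|\leq 7/25$; (ii) $x_2^2+y_2^2=1$, $|x_2+1|\leq 1/25$, $|y_2|\leq 7/25$; (iii) $|x_3|\leq 7/25$, $|y_3-1|\leq 1/25$; (iv) the triangle $A_1B_1C_1$ contains $O=(0,0)$ in its interior or on its edges. Then $$\delta(A_1,B_1)+\delta(B_1,C_1)+\delta(C_1,A_1)+\delta(A_1,D_1)+\delta(B_1,D_1)+\delta(C_1,D_1)\leq 4+4\sqrt{2},$$ and equality holds if and only if $B_1=(1,0)$, $C_1=(-1,0)$, $D_1=(0,1)$. *)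

theory Defs
  imports "HOL-Analysis.Analysis"
begin

text \<open>delta(P,Q) = sqrt(2 - 2xx' - 2yy'); the paper uses it only when xx'+yy' <= 1,
which holds for all pairs occurring in theorem3 under its hypotheses.\<close>
definition delta :: "real \<times> real \<Rightarrow> real \<times> real \<Rightarrow> real" where
  "delta P Q = sqrt (2 - 2 * fst P * fst Q - 2 * snd P * snd Q)"

end

theory Submission
  imports Defs
begin

lemma Qpos: fixes a :: real assumes "a \<ge> 21/25" shows "a^4 + 2*a^3 + 7*a^2 - 4*a - 2 > 0"
proof -
  have h3: "a^3 \<ge> (21/25)^3" using assms by (intro power_mono) auto
  have h4: "a^4 \<ge> 0" by simp
  have e: "7*a^2 - 4*a - 2 = 7*(a - 2/7)^2 - 18/7" by (simp add: power2_eq_square algebra_simps)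
  have h2: "(a - 2/7)^2 \<ge> (21/25 - 2/7)^2" using assms by (intro power_mono) auto
  have n1: "((21::real)/25)^3 = 9261/15625" by (simp add: power3_eq_cube)
  have n2: "((21::real)/25 - 2/7)^2 = 9409/30625" by (simp add: power2_eq_square)
  show ?thesis using h3 h4 e h2 n1 n2 by linarith
qed

lemma coreab: fixes a b :: real
  assumes "a \<ge> 0" "b \<ge> 0" "a^2 + b^2 = 2" "a \<ge> 21/25" "a \<le> 6/5"
  shows "2*a^2 + a^2*b + b \<le> 4*a" and "2*a^2 + a^2*b + b = 4*a \<Longrightarrow> a = 1"
proof -
  have Q: "a^4 + 2*a^3 + 7*a^2 - 4*a - 2 > 0" using Qpos assms by auto
  have b2: "b^2 = 2 - a^2" using assms(3) by simp
  have Pid: "(4*a - 2*a^2)^2 - (b*(a^2+1))^2 = (a-1)^2 * (a^4 + 2*a^3 + 7*a^2 - 4*a - 2)"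
    unfolding power_mult_distrib b2 by (simp add: power2_eq_square eval_nat_numeral algebra_simps)
  have P: "(4*a - 2*a^2)^2 \<ge> (b*(a^2+1))^2" using Pid Q
    by (smt (verit) mult_nonneg_nonneg zero_le_power2)
  have pos: "4*a - 2*a^2 \<ge> 0" 
  proof -
    have "a * (4 - 2*a) \<ge> 0" using assms by (intro mult_nonneg_nonneg) auto
    thus ?thesis by (simp add: power2_eq_square algebra_simps)
  qed
  have bpos: "b*(a^2+1) \<ge> 0" using assms by simp
  have "b*(a^2+1) \<le> 4*a - 2*a^2" using P pos bpos using power2_le_imp_le by blast 
  thus "2*a^2 + a^2*b + b \<le> 4*a" by (simp add: algebra_simps)
  assume "2*a^2 + a^2*b + b = 4*a"
  hence "b*(a^2+1) = 4*a - 2*a^2" by (simp add: algebra_simps)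
  hence "(a-1)^2 * (a^4 + 2*a^3 + 7*a^2 - 4*a - 2) = 0" using Pid by simp
  thus "a = 1" using Q by simp
qed

lemma amgm: fixes u w :: real assumes "w > 0" "u \<ge> 0"
  shows "sqrt u \<le> (w + u/w)/2" and "sqrt u = (w + u/w)/2 \<Longrightarrow> sqrt u = w"
proof -
  have "(sqrt u - w)^2 \<ge> 0" by simp
  hence "u - 2*w * sqrt u + w^2 \<ge> 0" using assms by (simp add: power2_eq_square algebra_simps)
  hence "2*w * sqrt u \<le> w*w + u" by (simp add: power2_eq_square)
  thus "sqrt u \<le> (w + u/w)/2" using assms by (simp add: field_simps)
  assume "sqrt u = (w + u/w)/2"
  hence "2*w * sqrt u = w*w + u" using assms by (simp add: field_simps)
  hence "(sqrt u - w)^2 = 0" using assms by (simp add: power2_eq_square algebra_simps)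
  thus "sqrt u = w" by simp
qed

lemma coreg: fixes x y :: real
  assumes "x > 0" "x^2 + y^2 = 1" "\<bar>y\<bar> \<le> 7/25"
  shows "sqrt(2+2*y) + sqrt 2/2 * x + sqrt 2/2 * ((1-y)/x) \<le> 2* sqrt 2"
    and "sqrt(2+2*y) + sqrt 2/2 * x + sqrt 2/2 * ((1-y)/x) = 2* sqrt 2 \<Longrightarrow> y = 0"
proof -
  define a where "a = sqrt(1+y)"
  define b where "b = sqrt(1-y)"
  have yb: "-1 \<le> y" "y \<le> 1" using assms(3) by auto
  have a2: "a^2 = 1+y" unfolding a_def using yb by simp
  have b2: "b^2 = 1-y" unfolding b_def using yb by simp
  have a0: "a \<ge> 0" "b \<ge> 0" unfolding a_def b_def using yb by auto
  have "(a*b)^2 = x^2" unfolding power_mult_distrib a2 b2 using assms(2) by (simp add: power2_eq_square algebra_simps)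
  hence xab: "x = a*b" using a0 assms(1) by (metis mult_nonneg_nonneg less_imp_le power2_eq_imp_eq)
  have s: "sqrt(2+2*y) = sqrt 2 * a" unfolding a_def using yb by (simp add: real_sqrt_mult[symmetric] algebra_simps)
  have "(21/25)^2 \<le> a^2" using a2 assms(3) by (simp add: power2_eq_square)
  hence alo: "a \<ge> 21/25" using a0(1) by (rule power2_le_imp_le)
  have "a^2 \<le> (6/5)^2" using a2 assms(3) by (simp add: power2_eq_square)
  hence ahi: "a \<le> 6/5" by (rule power2_le_imp_le) simp
  have apos: "a > 0" using alo by simp
  have bpos: "b > 0" using xab assms(1) a0 by (metis mult_zero_right order_le_less)
  have q: "(1-y)/x = b/a" unfolding xab b2[symmetric] using bpos apos by (simp add: power2_eq_square)
  have ab2: "a^2 + b^2 = 2" using a2 b2 by simp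
  have E: "sqrt(2+2*y) + sqrt 2/2 * x + sqrt 2/2 * ((1-y)/x) = sqrt 2 / (2*a) * (2*a^2 + a^2*b + b)"
    unfolding q unfolding s xab using apos by (simp add: field_simps power2_eq_square)
  have "2* sqrt 2 = sqrt 2 / (2*a) * (4*a)" using apos by (simp add: field_simps)
  note E2 = this
  have c: "sqrt 2 / (2*a) > 0" using apos by simp
  show "sqrt(2+2*y) + sqrt 2/2 * x + sqrt 2/2 * ((1-y)/x) \<le> 2* sqrt 2"
    unfolding E E2 using coreab(1)[OF a0 ab2 alo ahi] c by (intro mult_left_mono) auto
  assume "sqrt(2+2*y) + sqrt 2/2 * x + sqrt 2/2 * ((1-y)/x) = 2* sqrt 2"
  hence "sqrt 2 / (2*a) * (2*a^2 + a^2*b + b) = sqrt 2 / (2*a) * (4*a)" unfolding E using E2 by simp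
  hence "2*a^2 + a^2*b + b = 4*a" using c by (subst (asm) mult_left_cancel) auto
  hence "a = 1" using coreab(2)[OF a0 ab2 alo ahi] by simp
  thus "y = 0" using a2 by simp
qed

theorem theorem3:
  fixes x1 y1 x2 y2 x3 y3 :: real
  assumes box: "\<bar>x1\<bar> \<le> 1" "\<bar>y1\<bar> \<le> 1" "\<bar>x2\<bar> \<le> 1" "\<bar>y2\<bar> \<le> 1"
      "\<bar>x3\<bar> \<le> 1" "\<bar>y3\<bar> \<le> 1"
    and i: "x1^2 + y1^2 = 1" "\<bar>x1 - 1\<bar> \<le> 1/25" "\<bar>y1\<bar> \<le> 7/25"
    and ii: "x2^2 + y2^2 = 1" "\<bar>x2 + 1\<bar> \<le> 1/25" "\<bar>y2\<bar> \<le> 7/25"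
    and iii: "\<bar>x3\<bar> \<le> 7/25" "\<bar>y3 - 1\<bar> \<le> 1/25"
    and iv: "(0::real, 0::real) \<in> convex hull {(0, -1), (x1, y1), (x2, y2)}"
  shows "(delta (0, -1) (x1, y1) + delta (x1, y1) (x2, y2) + delta (x2, y2) (0, -1)
           + delta (0, -1) (x3, y3) + delta (x1, y1) (x3, y3) + delta (x2, y2) (x3, y3)
         \<le> 4 + 4 * sqrt 2) \<and>
       ((delta (0, -1) (x1, y1) + delta (x1, y1) (x2, y2) + delta (x2, y2) (0, -1)
           + delta (0, -1) (x3, y3) + delta (x1, y1) (x3, y3) + delta (x2, y2) (x3, y3)
         = 4 + 4 * sqrt 2
       \<longleftrightarrow> (x1 = 1 \<and> y1 = 0 \<and> x2 = -1 \<and> y2 = 0 \<and> x3 = 0 \<and> y3 = 1)))"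
proof -
  define r where "r = sqrt (2::real)"
  have r2: "r * r = 2" unfolding r_def by simp
  have rpos: "r > 0" unfolding r_def by simp
  have rlt: "r < 3/2"
  proof -
    have "r^2 < (3/2)^2" using r2 by (simp add: power2_eq_square)
    thus ?thesis using power_less_imp_less_base[of r 2 "3/2"] by simp
  qed
  have x1p: "x1 \<ge> 24/25" using i(2) by linarith
  have x2n: "x2 \<le> -24/25" using ii(2) by linarith
  have y3b: "y3 \<le> 1" "y3 \<ge> 24/25" using iii(2) box(6) by linarith+
  have e1: "delta (0, -1) (x1, y1) = sqrt(2+2*y1)" by (simp add: delta_def)
  have e2: "delta (x1, y1) (x2, y2) = sqrt(2 - 2*x1*x2 - 2*y1*y2)" by (simp add: delta_def)
  have e3: "delta (x2, y2) (0, -1) = sqrt(2+2*y2)" by (simp add: delta_def)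
  have e4: "delta (0, -1) (x3, y3) = sqrt(2+2*y3)" by (simp add: delta_def)
  have e5: "delta (x1, y1) (x3, y3) = sqrt(2 - 2*x1*x3 - 2*y1*y3)" by (simp add: delta_def)
  have e6: "delta (x2, y2) (x3, y3) = sqrt(2 - 2*x2*x3 - 2*y2*y3)" by (simp add: delta_def)
  define G1 where "G1 = sqrt(2+2*y1) + sqrt 2/2 * x1 + sqrt 2/2 * ((1-y1)/x1)"
  define G2 where "G2 = sqrt(2+2*y2) + sqrt 2/2 * (-x2) + sqrt 2/2 * ((1-y2)/(-x2))"
  have g1: "G1 \<le> 2 * sqrt 2" and g1e: "G1 = 2 * sqrt 2 \<Longrightarrow> y1 = 0"
    unfolding G1_def using coreg[of x1 y1] x1p i by auto
  have ii1: "(-x2)^2 + y2^2 = 1" using ii(1) by simp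
  have g2: "G2 \<le> 2 * sqrt 2" and g2e: "G2 = 2 * sqrt 2 \<Longrightarrow> y2 = 0"
    unfolding G2_def using coreg[of "-x2" y2, OF _ ii1] x2n ii by auto
  have "4 - (2 - 2*x1*x2 - 2*y1*y2) = (x1+x2)^2 + (y1+y2)^2"
    using i(1) ii(1) by (simp add: power2_eq_square algebra_simps)
  hence "2 - 2*x1*x2 - 2*y1*y2 \<le> 4" using zero_le_power2[of "x1+x2"] zero_le_power2[of "y1+y2"] by linarith
  hence "sqrt (2 - 2*x1*x2 - 2*y1*y2) \<le> sqrt 4" by (rule real_sqrt_le_mono)
  hence bc: "sqrt (2 - 2*x1*x2 - 2*y1*y2) \<le> 2" by simp
  have ad: "sqrt(2+2*y3) \<le> (2 + (2+2*y3)/2)/2" using amgm(1)[of 2 "2+2*y3"] y3b by simp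
  have p1: "\<bar>x1*x3\<bar> \<le> 7/25"
  proof -
    have "\<bar>x1\<bar>*\<bar>x3\<bar> \<le> 1*(7/25)" by (rule mult_mono) (use box iii in auto)
    thus ?thesis by (simp add: abs_mult)
  qed
  have p2: "\<bar>y1*y3\<bar> \<le> 7/25"
  proof -
    have "\<bar>y1\<bar>*\<bar>y3\<bar> \<le> (7/25)*1" by (rule mult_mono) (use box i in auto)
    thus ?thesis by (simp add: abs_mult)
  qed
  have p3: "\<bar>x2*x3\<bar> \<le> 7/25"
  proof -
    have "\<bar>x2\<bar>*\<bar>x3\<bar> \<le> 1*(7/25)" by (rule mult_mono) (use box iii in auto)
    thus ?thesis by (simp add: abs_mult)
  qed
  have p4: "\<bar>y2*y3\<bar> \<le> 7/25"
  proof -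
    have "\<bar>y2\<bar>*\<bar>y3\<bar> \<le> (7/25)*1" by (rule mult_mono) (use box ii in auto)
    thus ?thesis by (simp add: abs_mult)
  qed
  define uB where "uB = 2 - 2*x1*x3 - 2*y1*y3"
  define uC where "uC = 2 - 2*x2*x3 - 2*y2*y3"
  have uB0: "uB \<ge> 0" unfolding uB_def using p1 p2 abs_ge_self[of "x1*x3"] abs_ge_self[of "y1*y3"] by linarith
  have uC0: "uC \<ge> 0" unfolding uC_def using p3 p4 abs_ge_self[of "x2*x3"] abs_ge_self[of "y2*y3"] by linarith
  have wB: "r*x1 > 0" using rpos x1p by simp
  have wC: "-r*x2 > 0" using rpos x2n by (simp add: mult_pos_neg)
  have bd: "sqrt uB \<le> (r*x1 + uB/(r*x1))/2" using amgm(1)[OF wB uB0] .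
  have cd: "sqrt uC \<le> (-r*x2 + uC/(-r*x2))/2" using amgm(1)[OF wC uC0] .
  define K where "K = (1-y3) * (1/2 - r/2*(y1/x1 - y2/x2))"
  have q1: "\<bar>y1/x1\<bar> \<le> 7/24"
  proof -
    have "\<bar>x1\<bar> = x1" using x1p by simp
    hence h: "\<bar>y1\<bar> \<le> 7/24 * \<bar>x1\<bar>" using i(3) x1p by linarith
    have ax: "\<bar>x1\<bar> > 0" using x1p by simp
    show ?thesis unfolding abs_divide pos_divide_le_eq[OF ax] using h by linarith
  qed
  have q2: "\<bar>y2/x2\<bar> \<le> 7/24"
  proof -
    have "\<bar>x2\<bar> = -x2" using x2n by simp
    hence h: "\<bar>y2\<bar> \<le> 7/24 * \<bar>x2\<bar>" using ii(3) x2n by linarith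
    have ax: "\<bar>x2\<bar> > 0" using x2n by simp
    show ?thesis unfolding abs_divide pos_divide_le_eq[OF ax] using h by linarith
  qed
  have t1: "\<bar>y1/x1 - y2/x2\<bar> \<le> 7/12" using q1 q2 abs_triangle_ineq4[of "y1/x1" "y2/x2"] by linarith
  have t2: "\<bar>r/2\<bar> \<le> 3/4" using rpos rlt by simp
  have "\<bar>r/2\<bar> * \<bar>y1/x1 - y2/x2\<bar> \<le> 3/4 * (7/12)"
    by (rule mult_mono[OF t2 t1]) auto
  hence "\<bar>r/2*(y1/x1 - y2/x2)\<bar> \<le> 7/16" unfolding abs_mult by simp
  hence F7: "1/2 - r/2*(y1/x1 - y2/x2) > 0" using abs_ge_self[of "r/2*(y1/x1 - y2/x2)"] by linarith
  have K0: "K \<ge> 0" unfolding K_def using F7 y3b by simp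
  have rr: "\<And>z. r*(r*z) = 2*z" using r2 by (metis mult.assoc)
  have ident: "(2 + (2+2*y3)/2)/2 + (r*x1 + uB/(r*x1))/2 + (-r*x2 + uC/(-r*x2))/2
      = 2 + (G1 - sqrt(2+2*y1)) + (G2 - sqrt(2+2*y2)) - K"
    unfolding G1_def G2_def K_def uB_def uC_def r_def[symmetric] using x1p x2n rpos r2
    by (simp add: field_simps rr)
  have ub: "sqrt(2+2*y1) + sqrt(2 - 2*x1*x2 - 2*y1*y2) + sqrt(2+2*y2) + sqrt(2+2*y3) + sqrt uB + sqrt uC
      \<le> G1 + G2 + sqrt(2 - 2*x1*x2 - 2*y1*y2) + 2 - K" using ad bd cd ident by linarith
  have g1r: "G1 \<le> 2*r" and g2r: "G2 \<le> 2*r" using g1 g2 unfolding r_def by auto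
  have part1: "sqrt(2+2*y1) + sqrt(2 - 2*x1*x2 - 2*y1*y2) + sqrt(2+2*y2) + sqrt(2+2*y3) + sqrt uB + sqrt uC
      \<le> 4 + 4*r" using ub g1r g2r bc K0 by linarith
  have part2: "x1 = 1 \<and> y1 = 0 \<and> x2 = -1 \<and> y2 = 0 \<and> x3 = 0 \<and> y3 = 1"
    if eq: "sqrt(2+2*y1) + sqrt(2 - 2*x1*x2 - 2*y1*y2) + sqrt(2+2*y2) + sqrt(2+2*y3) + sqrt uB + sqrt uC
      = 4 + 4*r"
  proof -
    have "G1 = 2*r" using eq ub g1r g2r bc K0 ad bd cd ident by linarith
    hence y10: "y1 = 0" using g1e unfolding r_def by simp
    have "G2 = 2*r" using eq ub g1r g2r bc K0 ad bd cd ident by linarith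
    hence y20: "y2 = 0" using g2e unfolding r_def by simp
    have "K = 0" using eq ub g1r g2r bc K0 ad bd cd ident by linarith
    hence y31: "y3 = 1" unfolding K_def using F7 by simp
    have "x1^2 = 1" using i(1) y10 by simp
    hence "x1 = 1 \<or> x1 = -1" by (simp add: power2_eq_1_iff)
    hence x11: "x1 = 1" using x1p by linarith
    have "x2^2 = 1" using ii(1) y20 by simp
    hence "x2 = 1 \<or> x2 = -1" by (simp add: power2_eq_1_iff)
    hence x21: "x2 = -1" using x2n by linarith
    have "sqrt uB = (r*x1 + uB/(r*x1))/2" using eq ub g1r g2r bc K0 ad bd cd ident by linarith
    hence "sqrt uB = r*x1" using amgm(2)[OF wB uB0] by simp
    hence "sqrt uB = r" using x11 by simp
    hence "(sqrt uB)^2 = r^2" by simp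
    hence "uB = 2" using uB0 r2 by (simp add: power2_eq_square)
    hence x30: "x3 = 0" unfolding uB_def using x11 y10 by simp
    show ?thesis using x11 y10 x21 y20 x30 y31 by simp
  qed
  have LHS: "delta (0, -1) (x1, y1) + delta (x1, y1) (x2, y2) + delta (x2, y2) (0, -1)
           + delta (0, -1) (x3, y3) + delta (x1, y1) (x3, y3) + delta (x2, y2) (x3, y3)
      = sqrt(2+2*y1) + sqrt(2 - 2*x1*x2 - 2*y1*y2) + sqrt(2+2*y2) + sqrt(2+2*y3) + sqrt uB + sqrt uC"
    unfolding e1 e2 e3 e4 e5 e6 uB_def uC_def by simp
  have part3: "sqrt(2+2*y1) + sqrt(2 - 2*x1*x2 - 2*y1*y2) + sqrt(2+2*y2) + sqrt(2+2*y3) + sqrt uB + sqrt uC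
      = 4 + 4*r" if "x1 = 1 \<and> y1 = 0 \<and> x2 = -1 \<and> y2 = 0 \<and> x3 = 0 \<and> y3 = 1"
  proof -
    from that have h: "x1 = 1" "y1 = 0" "x2 = -1" "y2 = 0" "x3 = 0" "y3 = 1" by auto
    show ?thesis unfolding uB_def uC_def r_def h by simp
  qed
  note P1 = part1[unfolded r_def]
  note P2 = part2[unfolded r_def]
  note P3 = part3[unfolded r_def]
  show ?thesis unfolding LHS
    apply (rule conjI)
     apply (rule P1)
    apply (rule iffI)
     apply (erule P2)
    apply (erule P3)
    done
qed

end
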